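(* Let $\{\mathsf{P}_\theta : \theta \in \mathbb{T}\}$ be a statistical model for data $Y$ taking values in $\mathbb{Y}$, with likelihood $\theta \mapsto L_y(\theta)$ and maximum likelihood estimator $\hat\theta_y$ existing for each $y$. Let $R(y,\theta) = L_y(\theta)/L_y(\hat\theta_y)$, let $\pi_y(\theta) = \mathsf{P}_\theta\{R(Y,\theta) \le R(y,\theta)\}$, and define $\overline{\Pi}_y(H) = \sup_{\theta \in H} \pi_y(\theta)$ and $\underline{\Pi}_y(H) = 1 - \overline{\Pi}_y(H^c)$ for $H \subseteq \mathbb{T}$. Then for all $\alpha \in [0,1]$: (a) for any given $H \subseteq \mathbb{T}$, the test that rejects $H$ if and only if $\overline{\Pi}_Y(H) \le \alpha$ has Type I error probability at most $\alpha$, i.e., \[ \sup_{\Theta \in H} \mathsf{P}_\Theta\{ \overline{\Pi}_Y(H) \le \alpha \} \le \alpha; \] (b) the set $C_\alpha(Y) = \{\theta \in \mathbb{T} : \pi_Y(\theta) > \alpha\}$ has coverage probability at least $1-\alpha$, i.e., \[ \sup_{\Theta \in \mathbb{T}} \mathsf{P}_\Theta\{ C_\alpha(Y) \not\ni \Theta \} \le \alpha. \]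
   Context: Here $\Theta$ denotes the true parameter value and $Y \sim \mathsf{P}_\Theta$. The pair $(\underline{\Pi}_y, \overline{\Pi}_y)$ is the necessity–possibility measure pair (the inferential model output) determined by the possibility contour $\pi_y$. *)

theory Defs
  imports "HOL-Probability.Probability"
begin

text \<open>Statistical model: P theta is the distribution of the data Y for parameter theta
  (the parameter space is the whole type 'p); L y theta is the likelihood; mle y is
  a maximum likelihood estimate.\<close>

definition relLik :: "('y \<Rightarrow> 'p \<Rightarrow> real) \<Rightarrow> ('y \<Rightarrow> 'p) \<Rightarrow> 'y \<Rightarrow> 'p \<Rightarrow> real" where
  "relLik L mle y \<theta> = L y \<theta> / L y (mle y)"

definition plaus :: "('p \<Rightarrow> 'y measure) \<Rightarrow> ('y \<Rightarrow> 'p \<Rightarrow> real) \<Rightarrow> ('y \<Rightarrow> 'p) \<Rightarrow> 'y \<Rightarrow> 'p \<Rightarrow> real" where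
  "plaus P L mle y \<theta> =
     measure (P \<theta>) {y' \<in> space (P \<theta>). relLik L mle y' \<theta> \<le> relLik L mle y \<theta>}"

definition upperPi :: "('p \<Rightarrow> 'y measure) \<Rightarrow> ('y \<Rightarrow> 'p \<Rightarrow> real) \<Rightarrow> ('y \<Rightarrow> 'p) \<Rightarrow> 'y \<Rightarrow> 'p set \<Rightarrow> real" where
  "upperPi P L mle y H = (SUP \<theta>\<in>H. plaus P L mle y \<theta>)"

definition lowerPi :: "('p \<Rightarrow> 'y measure) \<Rightarrow> ('y \<Rightarrow> 'p \<Rightarrow> real) \<Rightarrow> ('y \<Rightarrow> 'p) \<Rightarrow> 'y \<Rightarrow> 'p set \<Rightarrow> real" where
  "lowerPi P L mle y H = 1 - upperPi P L mle y (- H)"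

end

theory Submission
  imports Defs
begin

lemma seq_exists:
  fixes S :: "real set"
  assumes ne: "S \<noteq> {}" and down: "\<And>u v. u \<le> v \<Longrightarrow> v \<in> S \<Longrightarrow> u \<in> S"
  shows "\<exists>t::nat \<Rightarrow> real. incseq t \<and> (\<forall>n. t n \<in> S) \<and> (\<forall>u\<in>S. \<exists>n. u \<le> t n)"
proof (cases "bdd_above S")
  case True
  define s where "s = Sup S"
  show ?thesis
  proof (cases "s \<in> S")
    case True
    then show ?thesis using \<open>bdd_above S\<close> by (intro exI[of _ "\<lambda>n. s"]) (auto simp: s_def cSup_upper)
  next
    case False
    define t where "t n = s - 1 / (real n + 1)" for n :: nat
    have inc: "incseq t" unfolding t_def
      by (intro incseq_SucI) (simp add: field_simps)
    have inS: "t n \<in> S" for n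
    proof -
      have "t n < s" unfolding t_def by simp
      then obtain v where "v \<in> S" "t n < v" using ne unfolding s_def by (meson less_cSupD)
      then show ?thesis by (meson down less_imp_le)
    qed
    have cov: "\<exists>n. u \<le> t n" if "u \<in> S" for u
    proof -
      have "u \<le> s" using that True unfolding s_def by (simp add: cSup_upper)
      with False that have "u < s" by (cases "u = s") auto
      then obtain n where "inverse (real (Suc n)) < s - u"
        using reals_Archimedean[of "s - u"] by auto
      then have "u \<le> t n" unfolding t_def by (simp add: field_simps)
      then show ?thesis by blast
    qed
    show ?thesis using inc inS cov by blast
  qed
next
  case False
  have inS: "real n \<in> S" for n :: nat
  proof -
    obtain v where "v \<in> S" "real n < v" using False unfolding bdd_above_def by (meson not_le)
    then show ?thesis by (meson down less_imp_le)
  qed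
  have cov: "\<exists>n. u \<le> real n" for u by (rule real_arch_simple)
  show ?thesis using inS cov by (intro exI[of _ "\<lambda>n. real n"]) (auto simp: incseq_def)
qed

lemma core:
  fixes M :: "'y measure" and T :: "'y \<Rightarrow> real" and \<alpha> :: real
  assumes "prob_space M" and Tm: "T \<in> borel_measurable M" and a0: "0 \<le> \<alpha>"
  shows "{x \<in> space M. measure M {y \<in> space M. T y \<le> T x} \<le> \<alpha>} \<in> sets M \<and> measure M {x \<in> space M. measure M {y \<in> space M. T y \<le> T x} \<le> \<alpha>} \<le> \<alpha>"
proof -
  interpret prob_space M by fact
  define F where "F t = measure M {y \<in> space M. T y \<le> t}" for t
  define S where "S = {t. F t \<le> \<alpha>}"
  have meas: "{y \<in> space M. T y \<le> t} \<in> sets M" for t using Tm by measurable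
  have mono: "F u \<le> F v" if "u \<le> v" for u v
    unfolding F_def using that meas by (intro finite_measure_mono) auto
  have down: "\<And>u v. u \<le> v \<Longrightarrow> v \<in> S \<Longrightarrow> u \<in> S"
    unfolding S_def using mono order_trans by blast
  have eq0: "{x \<in> space M. measure M {y \<in> space M. T y \<le> T x} \<le> \<alpha>} = {x \<in> space M. T x \<in> S}"
    unfolding S_def F_def by auto
  show ?thesis
  proof (cases "S = {}")
    case True
    then show ?thesis unfolding eq0 using a0 by simp
  next
    case False
    then obtain t where inc: "incseq t" and inS: "\<forall>n. t n \<in> S" and cov: "\<forall>u\<in>S. \<exists>n. u \<le> t n"
      using seq_exists[of S] False down by blast
    define A where "A n = {x \<in> space M. T x \<le> t n}" for n
    have eq: "{x \<in> space M. T x \<in> S} = (\<Union>n. A n)"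
      unfolding A_def using cov inS down by blast
    have rA: "range A \<subseteq> sets M" unfolding A_def using meas by auto
    have iA: "incseq A" unfolding A_def incseq_def using inc
      by (auto simp: incseq_def intro: order_trans)
    have lim: "(\<lambda>i. measure M (A i)) \<longlonglongrightarrow> measure M (\<Union>n. A n)"
      by (rule finite_Lim_measure_incseq[OF rA iA])
    have "measure M (A n) \<le> \<alpha>" for n using inS unfolding A_def S_def F_def by auto
    then have "measure M (\<Union>n. A n) \<le> \<alpha>"
      by (intro LIMSEQ_le_const2[OF lim]) auto
    moreover have "(\<Union>n. A n) \<in> sets M" using rA by blast
    ultimately show ?thesis unfolding eq0 eq by simp
  qed
qed

theorem corollary1:
  fixes P :: "'p \<Rightarrow> 'y measure" and \<mu> :: "'y measure"
    and L :: "'y \<Rightarrow> 'p \<Rightarrow> real" and mle :: "'y \<Rightarrow> 'p"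
  assumes prob: "\<forall>\<theta>. prob_space (P \<theta>)"
    and dens: "\<forall>\<theta>. P \<theta> = density \<mu> (\<lambda>y. ennreal (L y \<theta>))"
    and L_nonneg: "\<forall>y \<theta>. 0 \<le> L y \<theta>"
    and L_meas: "\<forall>\<theta>. (\<lambda>y. L y \<theta>) \<in> borel_measurable \<mu>"
    and mle: "\<forall>y\<in>space \<mu>. \<forall>\<theta>. L y \<theta> \<le> L y (mle y)"
    and R_meas: "\<forall>\<theta>. (\<lambda>y. relLik L mle y \<theta>) \<in> borel_measurable \<mu>"
  shows "\<forall>\<alpha>\<in>{0..1::real}.
           (\<forall>H \<Theta>. \<Theta> \<in> H \<longrightarrow>
              measure (P \<Theta>) {y \<in> space (P \<Theta>). upperPi P L mle y H \<le> \<alpha>} \<le> \<alpha>)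
         \<and> (\<forall>\<Theta>. measure (P \<Theta>) {y \<in> space (P \<Theta>). \<Theta> \<notin> {\<theta>. plaus P L mle y \<theta> > \<alpha>}} \<le> \<alpha>)"
proof (intro ballI conjI allI impI)
  fix \<alpha> :: real assume a: "\<alpha> \<in> {0..1}"
  have base: "{y \<in> space (P \<Theta>). plaus P L mle y \<Theta> \<le> \<alpha>} \<in> sets (P \<Theta>) \<and> measure (P \<Theta>) {y \<in> space (P \<Theta>). plaus P L mle y \<Theta> \<le> \<alpha>} \<le> \<alpha>" for \<Theta>
  proof -
    have Tm: "(\<lambda>y. relLik L mle y \<Theta>) \<in> borel_measurable (P \<Theta>)"
    proof -
      have "sets (P \<Theta>) = sets \<mu>" using dens by (metis sets_density)
      then have "(borel_measurable (P \<Theta>) :: (_ \<Rightarrow> real) set) = borel_measurable \<mu>" by (rule measurable_cong_sets) simp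
      then show ?thesis using R_meas by simp
    qed
    show ?thesis unfolding plaus_def
      using core[OF prob[rule_format] Tm] a by simp
  qed
  show "measure (P \<Theta>) {y \<in> space (P \<Theta>). \<Theta> \<notin> {\<theta>. plaus P L mle y \<theta> > \<alpha>}} \<le> \<alpha>" for \<Theta>
    using base[of \<Theta>] by (simp add: not_less)
  fix H :: "'p set" and \<Theta> :: 'p assume "\<Theta> \<in> H"
  interpret p: prob_space "P \<Theta>" using prob by blast
  have sub: "{y \<in> space (P \<Theta>). upperPi P L mle y H \<le> \<alpha>} \<subseteq> {y \<in> space (P \<Theta>). plaus P L mle y \<Theta> \<le> \<alpha>}"
  proof safe
    fix y assume "upperPi P L mle y H \<le> \<alpha>"
    moreover have "plaus P L mle y \<Theta> \<le> upperPi P L mle y H"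
      unfolding upperPi_def
    proof (rule cSUP_upper[OF \<open>\<Theta> \<in> H\<close>])
      have "plaus P L mle y \<theta> \<le> 1" for \<theta>
        unfolding plaus_def using prob prob_space.prob_le_1 by blast
      then show "bdd_above ((\<lambda>\<theta>. plaus P L mle y \<theta>) ` H)" by (meson bdd_above.I2)
    qed
    ultimately show "plaus P L mle y \<Theta> \<le> \<alpha>" by simp
  qed
  show "measure (P \<Theta>) {y \<in> space (P \<Theta>). upperPi P L mle y H \<le> \<alpha>} \<le> \<alpha>"
  proof (cases "{y \<in> space (P \<Theta>). upperPi P L mle y H \<le> \<alpha>} \<in> sets (P \<Theta>)")
    case True
    have "measure (P \<Theta>) {y \<in> space (P \<Theta>). upperPi P L mle y H \<le> \<alpha>}
          \<le> measure (P \<Theta>) {y \<in> space (P \<Theta>). plaus P L mle y \<Theta> \<le> \<alpha>}"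
      using sub base[of \<Theta>] by (intro p.finite_measure_mono) auto
    then show ?thesis using base[of \<Theta>] by linarith
  next
    case False
    then show ?thesis using a by (simp add: measure_notin_sets)
  qed
qed

end
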